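(* Let $T:[\ell,r)\to[\ell,r)$ be a $k$-IET over the ordered alphabet $\mathcal{A}$ with partition $(I_a)_{a\in\mathcal{A}}$ and permutation $\pi\in S_{\mathcal{A}}$. Let $\mathcal{B}\subset\mathcal{A}$ be a proper nonempty $T$-invariant sub-alphabet whose intervals $I_b$, $b\in\mathcal{B}$, are contiguous, and let $\overline{\mathcal{B}}=\mathcal{A}\setminus\mathcal{B}$. Then $S_{\mathcal{B}}$ is the IET over $\mathcal{B}$ (with the order inherited from $\mathcal{A}$) with permutation $\pi|_{\mathcal{B}}$, and $S_{\overline{\mathcal{B}}}$ is the IET over $\overline{\mathcal{B}}$ (with the inherited order) with permutation $\pi|_{\overline{\mathcal{B}}}$.
   Context: A $k$-IET on $[\ell,r)$ over $\mathcal{A}=\{a_1<\dots<a_k\}$ is given by a partition of $[\ell,r)$ into left-closed right-open intervals $(I_a)_{a\in\mathcal{A}}$ of positive length ordered left to right according to the order of $\mathcal{A}$, and a permutation $\pi$ of $\mathcal{A}$; $T(x)=x+\tau_a$ on $I_a$ with $\tau_a=\sum_{b:\,\pi^{-1}(b)<\pi^{-1}(a)}|I_b|-\sum_{b<a}|I_b|$, so the images $T(I_{\pi(a_1)}),\dots,T(I_{\pi(a_k)})$ appear from left to right. Write $I_{\mathcal{B}}=\bigcup_{b\in\mathcal{B}}I_b=[\gamma_{\mathcal{B}},\delta_{\mathcal{B}})$; $\mathcal{B}$ is $T$-invariant if $T(I_{\mathcal{B}})=I_{\mathcal{B}}$. Let $I_{\overline{\mathcal{B}}}=[\ell,r)\setminus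 I_{\mathcal{B}}$. Define $S_{\mathcal{B}}=T|_{I_{\mathcal{B}}}$. If $I_{\overline{\mathcal{B}}}$ is an interval, $S_{\overline{\mathcal{B}}}=T|_{I_{\overline{\mathcal{B}}}}$; otherwise $I_{\overline{\mathcal{B}}}=[\ell,\gamma_{\mathcal{B}})\cup[\delta_{\mathcal{B}},r)$, and with the gluing map $G(x)=x$ on $[\ell,\gamma_{\mathcal{B}})$, $G(x)=x-|I_{\mathcal{B}}|$ on $[\delta_{\mathcal{B}},r)$, one sets $S_{\overline{\mathcal{B}}}=G\circ T|_{I_{\overline{\mathcal{B}}}}\circ G^{-1}$ on $[\ell,r-|I_{\mathcal{B}}|)$, with partition given by the images $G(I_b)$, $b\in\overline{\mathcal{B}}$. *)

theory Defs
  imports Complex_Main "HOL-Combinatorics.Permutations"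
begin

text \<open>The images of I (p a_1), ..., I (p a_k) appear
  from left to right, i.e. "inv p" gives the image position (as a letter of A).\<close>

definition iet_left :: "real \<Rightarrow> 'a::linorder set \<Rightarrow> ('a \<Rightarrow> real) \<Rightarrow> 'a \<Rightarrow> real" where
  "iet_left l A len a = l + (\<Sum>b\<in>{b\<in>A. b < a}. len b)"

definition iet_interval :: "real \<Rightarrow> 'a::linorder set \<Rightarrow> ('a \<Rightarrow> real) \<Rightarrow> 'a \<Rightarrow> real set" where
  "iet_interval l A len a = {iet_left l A len a ..< iet_left l A len a + len a}"

definition iet_transl :: "'a::linorder set \<Rightarrow> ('a \<Rightarrow> real) \<Rightarrow> ('a \<Rightarrow> 'a) \<Rightarrow> 'a \<Rightarrow> real" where
  "iet_transl A len p a =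
     (\<Sum>b\<in>{b\<in>A. inv p b < inv p a}. len b) - (\<Sum>b\<in>{b\<in>A. b < a}. len b)"

definition iet_map :: "real \<Rightarrow> 'a::linorder set \<Rightarrow> ('a \<Rightarrow> real) \<Rightarrow> ('a \<Rightarrow> 'a) \<Rightarrow> real \<Rightarrow> real" where
  "iet_map l A len p x =
     (if \<exists>a\<in>A. x \<in> iet_interval l A len a
      then x + iet_transl A len p (THE a. a \<in> A \<and> x \<in> iet_interval l A len a)
      else x)"

definition iet_union :: "real \<Rightarrow> 'a::linorder set \<Rightarrow> ('a \<Rightarrow> real) \<Rightarrow> 'a set \<Rightarrow> real set" where
  "iet_union l A len B = (\<Union>b\<in>B. iet_interval l A len b)"

definition perm_restrict :: "('a::linorder \<Rightarrow> 'a) \<Rightarrow> 'a set \<Rightarrow> ('a \<Rightarrow> 'a)" where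
  "perm_restrict p B = (THE sigma. sigma permutes B \<and>
      (\<forall>b\<in>B. \<forall>b'\<in>B. inv sigma b < inv sigma b' \<longleftrightarrow> inv p b < inv p b'))"

definition sub_gamma :: "real \<Rightarrow> 'a::linorder set \<Rightarrow> ('a \<Rightarrow> real) \<Rightarrow> 'a set \<Rightarrow> real" where
  "sub_gamma l A len B = iet_left l A len (Min B)"

definition sub_delta :: "real \<Rightarrow> 'a::linorder set \<Rightarrow> ('a \<Rightarrow> real) \<Rightarrow> 'a set \<Rightarrow> real" where
  "sub_delta l A len B = sub_gamma l A len B + (\<Sum>b\<in>B. len b)"

text \<open>S_B = T restricted to I_B.\<close>
definition S_sub :: "real \<Rightarrow> 'a::linorder set \<Rightarrow> ('a \<Rightarrow> real) \<Rightarrow> ('a \<Rightarrow> 'a) \<Rightarrow> 'a set \<Rightarrow> real \<Rightarrow> real" where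
  "S_sub l A len p B = iet_map l A len p"

text \<open>Complement: if I_(A-B) is an interval (gamma_B = l, or delta_B = r) no gluing is
  done (G = id); otherwise G x = x on [l,gamma_B), G x = x - |I_B| on [delta_B,r).
  The left endpoint of the domain of S_(A-B) is compl_start.\<close>
definition compl_start :: "real \<Rightarrow> 'a::linorder set \<Rightarrow> ('a \<Rightarrow> real) \<Rightarrow> 'a set \<Rightarrow> real" where
  "compl_start l A len B = (if sub_gamma l A len B = l then sub_delta l A len B else l)"

definition glue :: "real \<Rightarrow> 'a::linorder set \<Rightarrow> ('a \<Rightarrow> real) \<Rightarrow> 'a set \<Rightarrow> real \<Rightarrow> real" where
  "glue l A len B x = (if sub_gamma l A len B = l \<or> x < sub_gamma l A len B then x
                       else x - (\<Sum>b\<in>B. len b))"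

definition glue_inv :: "real \<Rightarrow> 'a::linorder set \<Rightarrow> ('a \<Rightarrow> real) \<Rightarrow> 'a set \<Rightarrow> real \<Rightarrow> real" where
  "glue_inv l A len B y = (if sub_gamma l A len B = l \<or> y < sub_gamma l A len B then y
                       else y + (\<Sum>b\<in>B. len b))"

definition S_compl :: "real \<Rightarrow> 'a::linorder set \<Rightarrow> ('a \<Rightarrow> real) \<Rightarrow> ('a \<Rightarrow> 'a) \<Rightarrow> 'a set \<Rightarrow> real \<Rightarrow> real" where
  "S_compl l A len p B y = glue l A len B (iet_map l A len p (glue_inv l A len B y))"

end

theory Submission
  imports Defs
begin


lemma sum_lt_mono:
  fixes f :: "'a \<Rightarrow> 'b::linorder" and len :: "'a \<Rightarrow> real"
  assumes "finite C" "\<forall>c\<in>C. len c > 0" "a \<in> C" "f a < f a'"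
  shows "(\<Sum>c\<in>{c\<in>C. f c < f a}. len c) + len a \<le> (\<Sum>c\<in>{c\<in>C. f c < f a'}. len c)"
proof -
  have "(\<Sum>c\<in>{c\<in>C. f c < f a}. len c) + len a = (\<Sum>c\<in>insert a {c\<in>C. f c < f a}. len c)"
    using assms by (simp add: sum.insert)
  also have "\<dots> \<le> (\<Sum>c\<in>{c\<in>C. f c < f a'}. len c)"
    apply (rule sum_mono2) using assms by (auto intro: less_trans less_imp_le)
  finally show ?thesis .
qed

lemma sum_le_mono:
  fixes f :: "'a \<Rightarrow> 'b::linorder" and len :: "'a \<Rightarrow> real"
  assumes "finite C" "\<forall>c\<in>C. len c > 0" "f a \<le> f a'"
  shows "(\<Sum>c\<in>{c\<in>C. f c < f a}. len c) \<le> (\<Sum>c\<in>{c\<in>C. f c < f a'}. len c)"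
  apply (rule sum_mono2) using assms by (auto intro: less_le_trans less_imp_le)

lemma interval_disj:
  fixes f :: "'a \<Rightarrow> 'b::linorder" and len :: "'a \<Rightarrow> real"
  assumes "finite C" "\<forall>c\<in>C. len c > 0" "inj_on f C" "a \<in> C" "a' \<in> C" "a \<noteq> a'"
    "z \<in> {s + (\<Sum>c\<in>{c\<in>C. f c < f a}. len c) ..< s + (\<Sum>c\<in>{c\<in>C. f c < f a}. len c) + len a}"
    "z \<in> {s + (\<Sum>c\<in>{c\<in>C. f c < f a'}. len c) ..< s + (\<Sum>c\<in>{c\<in>C. f c < f a'}. len c) + len a'}"
  shows False
proof -
  have "f a \<noteq> f a'" using assms(3-6) by (auto simp: inj_on_def)
  then have "f a < f a' \<or> f a' < f a" by auto
  then show False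
  proof
    assume "f a < f a'"
    from sum_lt_mono[OF assms(1,2,4) this] assms(7,8) show False by auto
  next
    assume "f a' < f a"
    from sum_lt_mono[OF assms(1,2,5) this] assms(7,8) show False by auto
  qed
qed

lemma iet_map_eq:
  assumes "finite A" "\<forall>c\<in>A. len c > 0" "a \<in> A" "x \<in> iet_interval l A len a"
  shows "iet_map l A len p x = x + iet_transl A len p a"
proof -
  have u: "a' = a" if "a' \<in> A" "x \<in> iet_interval l A len a'" for a'
  proof (rule ccontr)
    assume "a' \<noteq> a"
    show False
      using interval_disj[of A len "\<lambda>x. x" a' a x l] assms that \<open>a' \<noteq> a\<close>
      by (auto simp: iet_interval_def iet_left_def)
  qed
  have "(THE a. a \<in> A \<and> x \<in> iet_interval l A len a) = a"
  proof (rule the_equality)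
    show "a \<in> A \<and> x \<in> iet_interval l A len a" using assms by simp
  next
    fix a' assume "a' \<in> A \<and> x \<in> iet_interval l A len a'"
    then show "a' = a" using u by blast
  qed
  then show ?thesis using assms unfolding iet_map_def by auto
qed

lemma contiguous_left:
  assumes "finite A" "C \<subseteq> A" "C \<noteq> {}"
    "\<forall>a\<in>A. \<forall>b1\<in>C. \<forall>b2\<in>C. b1 \<le> a \<and> a \<le> b2 \<longrightarrow> a \<in> C" "c \<in> C"
  shows "iet_left l A len c = iet_left (iet_left l A len (Min C)) C len c"
proof -
  have fC: "finite C" using assms finite_subset by auto
  have mC: "Min C \<le> c" using fC assms by auto
  have "{a\<in>A. a < c} = {a\<in>A. a < Min C} \<union> {a\<in>C. a < c}"
  proof (intro equalityI subsetI)
    fix a assume "a \<in> {a\<in>A. a < c}"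
    then show "a \<in> {a\<in>A. a < Min C} \<union> {a\<in>C. a < c}"
    proof (cases "a < Min C")
      case False
      then have "Min C \<le> a" by simp
      moreover have "a \<in> A" "a < c" using \<open>a \<in> {a\<in>A. a < c}\<close> by auto
      ultimately have "a \<in> C" using assms(4) assms(5) Min_in[OF fC assms(3)] by (meson less_imp_le)
      then show ?thesis using \<open>a < c\<close> by simp
    qed (use \<open>a \<in> {a\<in>A. a < c}\<close> in simp)
  qed (use assms mC in auto)
  moreover have "{a\<in>A. a < Min C} \<inter> {a\<in>C. a < c} = {}" using Min_le[OF fC] by fastforce
  ultimately have "(\<Sum>b\<in>{a\<in>A. a < c}. len b) = (\<Sum>b\<in>{a\<in>A. a < Min C}. len b) + (\<Sum>b\<in>{a\<in>C. a < c}. len b)"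
    using assms fC by (simp add: sum.union_disjoint[symmetric])
  then show ?thesis by (simp add: iet_left_def)
qed



lemma cover:
  fixes len :: "'a::linorder \<Rightarrow> real"
  assumes fC: "finite C" and ne: "C \<noteq> {}" and pos: "\<forall>c\<in>C. len c > 0"
  shows "(\<Union>c\<in>C. iet_interval s C len c) = {s..<s + sum len C}"
proof (intro equalityI subsetI)
  fix x assume "x \<in> (\<Union>c\<in>C. iet_interval s C len c)"
  then obtain c where c: "c \<in> C" "x \<in> iet_interval s C len c" by auto
  have "(\<Sum>b\<in>{b\<in>C. b < c}. len b) + len c = sum len (insert c {b\<in>C. b < c})"
    using fC by (simp add: sum.insert)
  also have "\<dots> \<le> sum len C"
    apply (rule sum_mono2) using fC c pos by (auto intro: less_imp_le)
  finally have "(\<Sum>b\<in>{b\<in>C. b < c}. len b) + len c \<le> sum len C" .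
  moreover have "0 \<le> (\<Sum>b\<in>{b\<in>C. b < c}. len b)" using pos by (intro sum_nonneg) (auto intro: less_imp_le)
  ultimately show "x \<in> {s..<s + sum len C}" using c by (auto simp: iet_interval_def iet_left_def)
next
  fix y assume y: "y \<in> {s..<s + sum len C}"
  define Lc where "Lc c = (\<Sum>b\<in>{b\<in>C. b < c}. len b)" for c
  define D where "D = {c\<in>C. s + Lc c \<le> y}"
  have e: "{b\<in>C. b < Min C} = {}" using Min_le[OF fC] by fastforce
  have "Lc (Min C) = 0" unfolding Lc_def e by simp
  then have "Min C \<in> D" using y Min_in[OF fC ne] by (simp add: D_def)
  have fD: "finite D" using fC by (auto simp: D_def)
  define b where "b = Max D"
  have bD: "b \<in> D" using Max_in[OF fD] \<open>Min C \<in> D\<close> b_def by auto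
  have bC: "b \<in> C" using bD by (auto simp: D_def)
  have "y < s + Lc b + len b"
  proof (rule ccontr)
    assume nlt: "\<not> y < s + Lc b + len b"
    show False
    proof (cases "\<exists>c\<in>C. b < c")
      case True
      define E where "E = {c\<in>C. b < c}"
      have fE: "finite E" "E \<noteq> {}" using fC True by (auto simp: E_def)
      define b' where "b' = Min E"
      have b'E: "b' \<in> E" using Min_in[OF fE] b'_def by auto
      have "{c\<in>C. c < b'} = insert b {c\<in>C. c < b}"
      proof (intro equalityI subsetI)
        fix c assume c: "c \<in> {c\<in>C. c < b'}"
        have "\<not> b < c"
        proof
          assume "b < c"
          then have "c \<in> E" using c by (auto simp: E_def)
          then have "b' \<le> c" using Min_le[OF fE(1)] b'_def by auto
          then show False using c by auto
        qed
        then show "c \<in> insert b {c\<in>C. c < b}" using c by auto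
      qed (use b'E bC in \<open>auto simp: E_def\<close>)
      then have "Lc b' = Lc b + len b" using fC by (simp add: Lc_def sum.insert)
      then have "b' \<in> D" using nlt b'E by (auto simp: D_def E_def)
      then have "b' \<le> b" using Max_ge[OF fD] b_def by auto
      then show False using b'E by (auto simp: E_def)
    next
      case False
      then have "C = insert b {c\<in>C. c < b}" using bC by (auto simp: not_less less_le)
      then have "sum len C = Lc b + len b" using fC
        by (metis (no_types, lifting) Lc_def add.commute finite.insertI finite_insert
            less_irrefl mem_Collect_eq sum.insert)
      then show False using nlt y by auto
    qed
  qed
  then show "y \<in> (\<Union>c\<in>C. iet_interval s C len c)"
    using bC bD by (auto simp: iet_interval_def iet_left_def D_def Lc_def)
qed

lemma rank_less:
  fixes f :: "'a \<Rightarrow> 'b::linorder"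
  assumes "finite C" "c \<in> C" "c' \<in> C"
  shows "(card {x\<in>C. f x < f c} < card {x\<in>C. f x < f c'}) = (f c < f c')"
proof
  assume "f c < f c'"
  then have "{x\<in>C. f x < f c} \<subset> {x\<in>C. f x < f c'}" using assms by auto
  then show "card {x\<in>C. f x < f c} < card {x\<in>C. f x < f c'}"
    by (rule psubset_card_mono[rotated]) (use assms in auto)
next
  assume "card {x\<in>C. f x < f c} < card {x\<in>C. f x < f c'}"
  moreover have "\<not> f c < f c' \<Longrightarrow> card {x\<in>C. f x < f c'} \<le> card {x\<in>C. f x < f c}"
    by (rule card_mono) (use assms in auto)
  ultimately show "f c < f c'" by linarith
qed

lemma rank_bij:
  fixes f :: "'a \<Rightarrow> 'b::linorder"
  assumes fC: "finite C" and inj: "inj_on f C"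
  shows "bij_betw (\<lambda>c. card {x\<in>C. f x < f c}) C {..<card C}"
proof -
  have i: "inj_on (\<lambda>c. card {x\<in>C. f x < f c}) C"
  proof (rule inj_onI)
    fix c c' assume cc: "c \<in> C" "c' \<in> C" "card {x\<in>C. f x < f c} = card {x\<in>C. f x < f c'}"
    then have "\<not> f c < f c'" "\<not> f c' < f c" using rank_less[OF fC, of c c' f] rank_less[OF fC, of c' c f] by auto
    then have "f c = f c'" by auto
    then show "c = c'" using inj cc by (auto simp: inj_on_def)
  qed
  have sub: "(\<lambda>c. card {x\<in>C. f x < f c}) ` C \<subseteq> {..<card C}"
  proof
    fix k assume "k \<in> (\<lambda>c. card {x\<in>C. f x < f c}) ` C"
    then obtain c where c: "c \<in> C" "k = card {x\<in>C. f x < f c}" by auto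
    have "{x\<in>C. f x < f c} \<subset> C" using c by auto
    then show "k \<in> {..<card C}" using c fC by (auto intro: psubset_card_mono)
  qed
  have "card ((\<lambda>c. card {x\<in>C. f x < f c}) ` C) = card {..<card C}"
    using card_image[OF i] by simp
  then have "(\<lambda>c. card {x\<in>C. f x < f c}) ` C = {..<card C}"
    using sub by (intro card_subset_eq) auto
  then show ?thesis using i by (simp add: bij_betw_def)
qed

lemma perm_restrict_set:
  fixes p :: "'a::linorder \<Rightarrow> 'a"
  assumes fC: "finite C" and injp: "inj (inv p)"
  shows "\<forall>b\<in>C. {c\<in>C. inv (perm_restrict p C) c < inv (perm_restrict p C) b} = {c\<in>C. inv p c < inv p b}"
proof -
  define Q where "Q sigma = (sigma permutes C \<and>
      (\<forall>b\<in>C. \<forall>b'\<in>C. inv sigma b < inv sigma b' \<longleftrightarrow> inv p b < inv p b'))" for sigma :: "'a \<Rightarrow> 'a"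
  define r1 where "r1 c = card {x\<in>C. x < c}" for c
  define r2 where "r2 c = card {x\<in>C. inv p x < inv p c}" for c
  have b1: "bij_betw r1 C {..<card C}" using rank_bij[OF fC, of "\<lambda>x. x"] unfolding r1_def[abs_def] by simp
  have b2: "bij_betw r2 C {..<card C}" using rank_bij[OF fC, of "inv p"] injp
    unfolding r2_def[abs_def] by (simp add: inj_on_subset)
  define g where "g b = inv_into C r1 (r2 b)" for b
  have gb: "bij_betw g C C" unfolding g_def
    using bij_betw_trans[OF b2 bij_betw_inv_into[OF b1]] by (simp add: o_def)
  have r1g: "r1 (g b) = r2 b" if "b \<in> C" for b
    unfolding g_def using b1 b2 that by (metis bij_betw_def f_inv_into_f image_eqI)
  define sig where "sig x = (if x \<in> C then inv_into C g x else x)" for x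
  have "bij_betw sig C C" using bij_betw_inv_into[OF gb]
    by (rule bij_betw_cong[THEN iffD1, rotated]) (simp add: sig_def)
  then have sp: "sig permutes C" by (rule bij_imp_permutes) (simp add: sig_def)
  have isig: "inv sig b = g b" if "b \<in> C" for b
  proof -
    have "g b \<in> C" using gb that by (auto simp: bij_betw_def)
    then have "sig (g b) = b" using gb that by (simp add: sig_def bij_betw_def)
    then show ?thesis using permutes_inv_eq[OF sp] by blast
  qed
  have Qs: "Q sig"
    unfolding Q_def
  proof (intro conjI sp ballI)
    fix b b' assume bb: "b \<in> C" "b' \<in> C"
    have gC: "g b \<in> C" "g b' \<in> C" using gb bb by (auto simp: bij_betw_def)
    have "inv sig b < inv sig b' \<longleftrightarrow> g b < g b'" using isig bb by simp
    also have "\<dots> \<longleftrightarrow> r1 (g b) < r1 (g b')" using rank_less[OF fC gC, of "\<lambda>x. x"] by (simp add: r1_def)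
    also have "\<dots> \<longleftrightarrow> r2 b < r2 b'" using r1g bb by simp
    also have "\<dots> \<longleftrightarrow> inv p b < inv p b'" using rank_less[OF fC bb, of "inv p"] by (simp add: r2_def)
    finally show "inv sig b < inv sig b' \<longleftrightarrow> inv p b < inv p b'" .
  qed
  have key: "r1 (inv s b) = r2 b" if "Q s" "b \<in> C" for s b
  proof -
    have sp': "s permutes C" and pr: "\<forall>b\<in>C. \<forall>b'\<in>C. inv s b < inv s b' \<longleftrightarrow> inv p b < inv p b'"
      using that by (auto simp: Q_def)
    have ip: "inv s permutes C" using permutes_inv[OF sp'] .
    have "{x\<in>C. x < inv s b} = inv s ` {c\<in>C. inv s c < inv s b}"
    proof (intro equalityI subsetI)
      fix x assume x: "x \<in> {x\<in>C. x < inv s b}"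
      have "x = inv s (s x)" using permutes_inverses(2)[OF sp'] by simp
      moreover have "s x \<in> C" using x permutes_in_image[OF sp'] by auto
      ultimately show "x \<in> inv s ` {c\<in>C. inv s c < inv s b}" using x by auto
    qed (use permutes_in_image[OF ip] in auto)
    moreover have "inj_on (inv s) {c\<in>C. inv s c < inv s b}"
      using permutes_inj[OF ip] by (auto simp: inj_on_def)
    ultimately have "r1 (inv s b) = card {c\<in>C. inv s c < inv s b}" by (simp add: r1_def card_image)
    also have "{c\<in>C. inv s c < inv s b} = {c\<in>C. inv p c < inv p b}" using pr that(2) by auto
    finally show ?thesis by (simp add: r2_def)
  qed
  have uniq: "s = sig" if "Q s" for s
  proof -
    have sp': "s permutes C" using that by (simp add: Q_def)
    have "inv s = inv sig"
    proof
      fix x show "inv s x = inv sig x"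
      proof (cases "x \<in> C")
        case True
        have "inv s x \<in> C" "inv sig x \<in> C"
          using True permutes_in_image[OF permutes_inv[OF sp']] permutes_in_image[OF permutes_inv[OF sp]] by auto
        moreover have "r1 (inv s x) = r1 (inv sig x)" using key[OF that True] key[OF Qs True] by simp
        ultimately show ?thesis using b1 by (auto simp: bij_betw_def inj_on_def)
      next
        case False
        then show ?thesis using permutes_not_in[OF permutes_inv[OF sp']] permutes_not_in[OF permutes_inv[OF sp]] by simp
      qed
    qed
    then show ?thesis using permutes_inv_inv[OF sp'] permutes_inv_inv[OF sp] by metis
  qed
  have "perm_restrict p C = sig"
    unfolding perm_restrict_def
  proof (rule the_equality)
    show "sig permutes C \<and> (\<forall>b\<in>C. \<forall>b'\<in>C. inv sig b < inv sig b' \<longleftrightarrow> inv p b < inv p b')"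
      using Qs unfolding Q_def by blast
  next
    fix s assume "s permutes C \<and> (\<forall>b\<in>C. \<forall>b'\<in>C. inv s b < inv s b' \<longleftrightarrow> inv p b < inv p b')"
    then have "Q s" unfolding Q_def by blast
    then show "s = sig" by (rule uniq)
  qed
  then have "Q (perm_restrict p C)" using Qs by simp
  then show ?thesis by (auto simp: Q_def)
qed



lemma shift_img: "(\<lambda>x::real. x - n) ` {u..<v} = {u - n..<v - n}"
proof (intro equalityI subsetI)
  fix y assume "y \<in> {u - n..<v - n}"
  then show "y \<in> (\<lambda>x::real. x - n) ` {u..<v}" by (intro image_eqI[of _ _ "y + n"]) auto
qed auto

theorem lemma4p9:
  fixes A B :: "'a::linorder set" and len :: "'a \<Rightarrow> real" and p :: "'a \<Rightarrow> 'a" and l :: real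
  assumes finA: "finite A"
    and pos: "\<forall>a\<in>A. len a > 0"
    and perm: "p permutes A"
    and sub: "B \<subseteq> A" and nonempty: "B \<noteq> {}" and proper: "B \<noteq> A"
    and contiguous: "\<forall>a\<in>A. \<forall>b1\<in>B. \<forall>b2\<in>B. b1 \<le> a \<and> a \<le> b2 \<longrightarrow> a \<in> B"
    and invariant: "iet_map l A len p ` iet_union l A len B = iet_union l A len B"
  shows "(\<forall>b\<in>B. iet_interval (sub_gamma l A len B) B len b = iet_interval l A len b)
       \<and> (\<forall>x\<in>iet_union l A len B.
            S_sub l A len p B x = iet_map (sub_gamma l A len B) B len (perm_restrict p B) x)
       \<and> (\<forall>b\<in>A - B. glue l A len B ` iet_interval l A len b
                      = iet_interval (compl_start l A len B) (A - B) len b)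
       \<and> (\<forall>y\<in>{compl_start l A len B ..< compl_start l A len B + (\<Sum>b\<in>A - B. len b)}.
            S_compl l A len p B y
              = iet_map (compl_start l A len B) (A - B) len (perm_restrict p (A - B)) y)"
proof -
  define T where "T = iet_map l A len p"
  define gam where "gam = sub_gamma l A len B"
  define n where "n = sum len B"
  define C where "C = A - B"
  define m where "m = Min B"
  define L where "L a = (\<Sum>c\<in>{c\<in>A. c < a}. len c)" for a
  define P where "P a = (\<Sum>c\<in>{c\<in>A. inv p c < inv p a}. len c)" for a
  define LB where "LB a = (\<Sum>c\<in>{c\<in>B. c < a}. len c)" for a
  define PB where "PB a = (\<Sum>c\<in>{c\<in>B. inv p c < inv p a}. len c)" for a
  define L' where "L' a = (\<Sum>c\<in>{c\<in>C. c < a}. len c)" for a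
  define P' where "P' a = (\<Sum>c\<in>{c\<in>C. inv p c < inv p a}. len c)" for a
  define cs where "cs = compl_start l A len B"
  have fB: "finite B" using finA sub finite_subset by auto
  have fC: "finite C" using finA by (simp add: C_def)
  have CA: "C \<subseteq> A" by (auto simp: C_def)
  have Cne: "C \<noteq> {}" using sub proper by (auto simp: C_def)
  have posB: "\<forall>c\<in>B. len c > 0" using pos sub by auto
  have posC: "\<forall>c\<in>C. len c > 0" using pos by (auto simp: C_def)
  have mB: "m \<in> B" using Min_in[OF fB nonempty] by (simp add: m_def)
  have mle: "m \<le> b" if "b \<in> B" for b using Min_le[OF fB that] by (simp add: m_def)
  have injp: "inj (inv p)" using permutes_inj[OF permutes_inv[OF perm]] .
  have injpA: "inj_on (inv p) A" using inj_on_subset[OF injp] by blast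
  have gam_eq: "gam = l + L m" by (simp add: gam_def sub_gamma_def iet_left_def L_def m_def)
  have n_pos: "n > 0" unfolding n_def using fB nonempty posB by (intro sum_pos) auto
  have Lnn: "L a \<ge> 0" for a unfolding L_def using pos by (intro sum_nonneg) (auto intro: less_imp_le)
  have Pnn: "P a \<ge> 0" for a unfolding P_def using pos by (intro sum_nonneg) (auto intro: less_imp_le)
  have leftA: "iet_left l A len a = l + L a" for a by (simp add: iet_left_def L_def)
  have intA: "iet_interval l A len a = {l + L a..<l + L a + len a}" for a
    by (simp add: iet_interval_def leftA)
  have leftB: "iet_left l A len b = iet_left gam B len b" if "b \<in> B" for b
    using contiguous_left[OF finA sub nonempty contiguous that] by (simp add: gam_def sub_gamma_def)
  have part1: "\<forall>b\<in>B. iet_interval gam B len b = iet_interval l A len b"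
    using leftB by (simp add: iet_interval_def)
  have Lsplit: "L b = (gam - l) + LB b" if "b \<in> B" for b
    using leftB[OF that] by (simp add: iet_left_def L_def LB_def)
  have IB: "iet_union l A len B = {gam..<gam + n}"
  proof -
    have "iet_union l A len B = (\<Union>b\<in>B. iet_interval gam B len b)"
      using part1 by (simp add: iet_union_def)
    also have "\<dots> = {gam..<gam + n}" using cover[OF fB nonempty posB] by (simp add: n_def)
    finally show ?thesis .
  qed
  have invB: "T ` {gam..<gam + n} = {gam..<gam + n}" using invariant IB by (simp add: T_def)
  have Tform: "T x = x + P a - L a" if "a \<in> A" "x \<in> iet_interval l A len a" for a x
    using iet_map_eq[OF finA pos that, of p] by (simp add: T_def iet_transl_def P_def L_def)
  have disjP: False if "a \<in> A" "a' \<in> A" "a \<noteq> a'" "z \<in> {l + P a..<l + P a + len a}"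
    "z \<in> {l + P a'..<l + P a' + len a'}" for a a' z
    using interval_disj[OF finA pos injpA that(1,2,3), of z l] that(4,5) by (simp add: P_def)
  have ltP: "P a + len a \<le> P a'" if "a \<in> A" "inv p a < inv p a'" for a a'
    using sum_lt_mono[OF finA pos that] by (simp add: P_def)
  have ltL: "L a + len a \<le> L a'" if "a \<in> A" "a < a'" for a a'
    using sum_lt_mono[OF finA pos that(1), of "\<lambda>x. x"] that(2) by (simp add: L_def)
  have inv_ne: "inv p a \<noteq> inv p a'" if "a \<noteq> a'" for a a'
    using injp that by (auto simp: inj_def)
  have imgB: "gam \<le> l + P b \<and> l + P b < gam + n" if "b \<in> B" for b
  proof -
    have xi: "l + L b \<in> iet_interval l A len b" using pos sub that by (auto simp: intA)
    then have "l + L b \<in> iet_union l A len B" using that by (auto simp: iet_union_def)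
    then have "T (l + L b) \<in> {gam..<gam + n}" using invB IB by auto
    moreover have "T (l + L b) = l + P b" using Tform[OF _ xi] sub that by auto
    ultimately show ?thesis by auto
  qed
  have preim: "\<exists>b\<in>B. l + P b \<le> z \<and> z < l + P b + len b" if "gam \<le> z" "z < gam + n" for z
  proof -
    have "z \<in> T ` {gam..<gam + n}" using invB that by auto
    then obtain x where x: "x \<in> iet_union l A len B" "z = T x" using IB by auto
    then obtain b where b: "b \<in> B" "x \<in> iet_interval l A len b" by (auto simp: iet_union_def)
    have "z = x + P b - L b" using Tform[OF _ b(2)] b(1) sub x(2) by auto
    moreover have "l + L b \<le> x" "x < l + L b + len b" using b(2) by (auto simp: intA)
    ultimately have "l + P b \<le> z \<and> z < l + P b + len b" by linarith
    then show ?thesis using b(1) by blast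
  qed
  have noB: False if h: "a \<in> C" "z \<in> {l + P a..<l + P a + len a}" "gam \<le> z" "z < gam + n" for a z
  proof -
    obtain b where b: "b \<in> B" "l + P b \<le> z" "z < l + P b + len b" using preim h(3,4) by blast
    show False using disjP[of a b z] h b sub by (auto simp: C_def)
  qed
  have dich: "l + P a + len a \<le> gam \<or> gam + n \<le> l + P a" if "a \<in> C" for a
  proof (rule ccontr)
    assume "\<not> ?thesis"
    then have h: "gam < l + P a + len a" "l + P a < gam + n" by auto
    show False
    proof (cases "gam \<le> l + P a")
      case True
      then show False using noB[OF that, of "l + P a"] h posC that by auto
    next
      case False
      then show False using noB[OF that, of gam] h n_pos by auto
    qed
  qed
  have leftInv: "inv p a < inv p b" if "a \<in> C" "l + P a + len a \<le> gam" "b \<in> B" for a b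
  proof (rule ccontr)
    assume "\<not> ?thesis"
    moreover have "a \<noteq> b" using that by (auto simp: C_def)
    ultimately have "inv p b < inv p a" using inv_ne[of a b] by auto
    then have "P b + len b \<le> P a" using ltP sub that(3) by auto
    moreover have "len a > 0" "len b > 0" using posB posC that by auto
    ultimately show False using imgB[OF that(3)] that(2) by linarith
  qed
  have rightInv: "inv p b < inv p a" if "a \<in> C" "gam + n \<le> l + P a" "b \<in> B" for a b
  proof (rule ccontr)
    assume "\<not> ?thesis"
    moreover have "a \<noteq> b" using that by (auto simp: C_def)
    ultimately have "inv p a < inv p b" using inv_ne[of a b] by auto
    then have "P a + len a \<le> P b" using ltP that(1) CA by auto
    then show False using imgB[OF that(3)] that(2) posC that(1) by auto
  qed
  define Left where "Left = {c\<in>C. l + P c + len c \<le> gam}"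
  have fLeft: "finite Left" using fC by (simp add: Left_def)
  have Psplit: "P b = sum len Left + PB b" if "b \<in> B" for b
  proof -
    have "{c\<in>A. inv p c < inv p b} = Left \<union> {c\<in>B. inv p c < inv p b}"
    proof (intro equalityI subsetI)
      fix c assume c: "c \<in> {c\<in>A. inv p c < inv p b}"
      show "c \<in> Left \<union> {c\<in>B. inv p c < inv p b}"
      proof (cases "c \<in> B")
        case False
        then have cC: "c \<in> C" using c by (simp add: C_def)
        have "\<not> gam + n \<le> l + P c" using rightInv[OF cC _ that] c by auto
        then show ?thesis using dich[OF cC] cC by (simp add: Left_def)
      qed (use c in simp)
    next
      fix c assume "c \<in> Left \<union> {c\<in>B. inv p c < inv p b}"
      then show "c \<in> {c\<in>A. inv p c < inv p b}"
        using leftInv[OF _ _ that] sub by (auto simp: Left_def C_def)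
    qed
    moreover have "Left \<inter> {c\<in>B. inv p c < inv p b} = {}" by (auto simp: Left_def C_def)
    ultimately show ?thesis unfolding P_def PB_def using fLeft fB
      by (simp add: sum.union_disjoint)
  qed
  have sumLeft: "sum len Left = gam - l"
  proof -
    obtain b1 where b1: "b1 \<in> B" "l + P b1 \<le> gam" using preim[of gam] n_pos by auto
    have "{c\<in>B. inv p c < inv p b1} = {}"
    proof (rule ccontr)
      assume "{c\<in>B. inv p c < inv p b1} \<noteq> {}"
      then obtain c where c: "c \<in> B" "inv p c < inv p b1" by auto
      then have "P c + len c \<le> P b1" using ltP sub by auto
      then show False using imgB[OF c(1)] b1 posB c(1) by auto
    qed
    then have "PB b1 = 0" unfolding PB_def by (simp only: sum.empty)
    then show ?thesis using Psplit[OF b1(1)] imgB[OF b1(1)] b1(2) by auto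
  qed
  have transl_eq: "iet_transl A len p b = iet_transl B len (perm_restrict p B) b" if "b \<in> B" for b
  proof -
    have "iet_transl A len p b = P b - L b" by (simp add: iet_transl_def P_def L_def)
    also have "\<dots> = PB b - LB b" using Psplit[OF that] Lsplit[OF that] sumLeft by simp
    also have "\<dots> = iet_transl B len (perm_restrict p B) b"
      using perm_restrict_set[OF fB injp] that by (simp add: iet_transl_def PB_def LB_def)
    finally show ?thesis .
  qed
  have part2: "\<forall>x\<in>iet_union l A len B. S_sub l A len p B x = iet_map gam B len (perm_restrict p B) x"
  proof
    fix x assume "x \<in> iet_union l A len B"
    then obtain b where b: "b \<in> B" "x \<in> iet_interval l A len b" by (auto simp: iet_union_def)
    have "S_sub l A len p B x = x + iet_transl A len p b"
      using iet_map_eq[OF finA pos _ b(2)] b(1) sub by (auto simp: S_sub_def)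
    also have "\<dots> = x + iet_transl B len (perm_restrict p B) b" using transl_eq[OF b(1)] by simp
    also have "\<dots> = iet_map gam B len (perm_restrict p B) x"
      using iet_map_eq[OF fB posB b(1), of x gam] b part1 by simp
    finally show "S_sub l A len p B x = iet_map gam B len (perm_restrict p B) x" .
  qed
  have side: "(\<forall>b\<in>B. a < b) \<or> (\<forall>b\<in>B. b < a)" if "a \<in> C" for a
  proof (rule ccontr)
    assume "\<not> ?thesis"
    then obtain b1 b2 where "b1 \<in> B" "b2 \<in> B" "\<not> a < b1" "\<not> b2 < a" by auto
    then show False using contiguous that by (auto simp: C_def not_less)
  qed
  have Llow: "L a = L' a \<and> L a + len a \<le> L m" if "a \<in> C" "\<forall>b\<in>B. a < b" for a
  proof
    have "{c\<in>A. c < a} = {c\<in>C. c < a}" using that by (auto simp: C_def)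
    then show "L a = L' a" by (simp add: L_def L'_def)
    show "L a + len a \<le> L m" using ltL[of a m] that mB CA by auto
  qed
  have Lup: "L a = n + L' a \<and> L m + n \<le> L a" if "a \<in> C" "\<forall>b\<in>B. b < a" for a
  proof
    have "{c\<in>A. c < a} = B \<union> {c\<in>C. c < a}" using that sub by (auto simp: C_def)
    moreover have "B \<inter> {c\<in>C. c < a} = {}" by (auto simp: C_def)
    ultimately show La: "L a = n + L' a" unfolding L_def L'_def n_def using fB fC
      by (simp add: sum.union_disjoint)
    have "{c\<in>A. c < m} \<subseteq> {c\<in>C. c < a}" using that mB mle by (force simp: C_def)
    then have "L m \<le> L' a" unfolding L_def L'_def
      using fC posC by (intro sum_mono2) (auto intro: less_imp_le)
    then show "L m + n \<le> L a" using La by simp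
  qed
  have Pleft: "P a = P' a" if "a \<in> C" "l + P a + len a \<le> gam" for a
  proof -
    have nb: "\<forall>b\<in>B. \<not> inv p b < inv p a" using leftInv[OF that] less_asym by blast
    have "{c\<in>A. inv p c < inv p a} = {c\<in>C. inv p c < inv p a}"
      using nb by (auto simp: C_def)
    then show ?thesis by (simp add: P_def P'_def)
  qed
  have Pright: "P a = n + P' a" if "a \<in> C" "gam + n \<le> l + P a" for a
  proof -
    have "{c\<in>A. inv p c < inv p a} = B \<union> {c\<in>C. inv p c < inv p a}"
      using rightInv[OF that] sub by (auto simp: C_def)
    moreover have "B \<inter> {c\<in>C. inv p c < inv p a} = {}" by (auto simp: C_def)
    ultimately show ?thesis unfolding P_def P'_def n_def using fB fC
      by (simp add: sum.union_disjoint)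
  qed
  have cs_eq: "cs = (if gam = l then gam + n else l)"
    by (simp add: cs_def compl_start_def gam_def sub_delta_def n_def)
  have glue_eq: "glue l A len B x = (if gam = l \<or> x < gam then x else x - n)" for x
    by (simp add: glue_def gam_def n_def)
  have glue_inv_eq: "glue_inv l A len B x = (if gam = l \<or> x < gam then x else x + n)" for x
    by (simp add: glue_inv_def gam_def n_def)
  have intC: "iet_interval cs C len a = {cs + L' a..<cs + L' a + len a}" for a
    by (simp add: iet_interval_def iet_left_def L'_def)
  have part3: "glue l A len B ` iet_interval l A len b = iet_interval cs C len b" if "b \<in> C" for b
  proof (cases "gam = l")
    case True
    have up: "\<forall>c\<in>B. c < b"
    proof (rule ccontr)
      assume "\<not> ?thesis"
      then have "\<forall>c\<in>B. b < c" using side[OF that] by auto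
      then show False using Llow[OF that] True gam_eq Lnn[of b] posC that by auto
    qed
    have "glue l A len B ` iet_interval l A len b = iet_interval l A len b"
      using True by (simp add: glue_eq)
    moreover have "iet_interval l A len b = iet_interval cs C len b"
      unfolding intA intC using Lup[OF that up] True cs_eq by (simp add: algebra_simps)
    ultimately show ?thesis by simp
  next
    case False
    show ?thesis
    proof (cases "\<forall>c\<in>B. b < c")
      case True
      have "glue l A len B ` iet_interval l A len b = (\<lambda>x. x) ` iet_interval l A len b"
        using Llow[OF that True] gam_eq by (intro image_cong) (auto simp: glue_eq intA)
      moreover have "iet_interval l A len b = iet_interval cs C len b"
        unfolding intA intC using Llow[OF that True] False cs_eq by simp
      ultimately show ?thesis by simp
    next
      case nlow: False
      then have up: "\<forall>c\<in>B. c < b" using side[OF that] by auto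
      have "glue l A len B ` iet_interval l A len b = (\<lambda>x. x - n) ` iet_interval l A len b"
        using Lup[OF that up] gam_eq False n_pos by (intro image_cong) (auto simp: glue_eq intA)
      also have "\<dots> = iet_interval cs C len b"
        unfolding intA intC shift_img using Lup[OF that up] False cs_eq by (simp add: algebra_simps)
      finally show ?thesis .
    qed
  qed
  have part4: "S_compl l A len p B y = iet_map cs C len (perm_restrict p C) y"
    if y: "y \<in> {cs..<cs + sum len C}" for y
  proof -
    have "y \<in> (\<Union>c\<in>C. iet_interval cs C len c)" using y cover[OF fC Cne posC, of cs] by simp
    then obtain a where a: "a \<in> C" "y \<in> iet_interval cs C len a" by blast
    have aA: "a \<in> A" using a CA by auto
    obtain x where x: "x \<in> iet_interval l A len a" "y = glue l A len B x"
      using a part3[OF a(1)] by (auto simp: image_iff)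
    have xr: "l + L a \<le> x" "x < l + L a + len a" using x(1) by (auto simp: intA)
    have gi: "glue_inv l A len B y = x"
    proof (cases "gam = l \<or> x < gam")
      case True then show ?thesis using x(2) by (auto simp: glue_eq glue_inv_eq)
    next
      case False
      then have up: "\<forall>c\<in>B. c < a" using side[OF a(1)] Llow[OF a(1)] xr gam_eq posC a(1) by auto
      then show ?thesis using False x(2) Lup[OF a(1) up] xr gam_eq by (auto simp: glue_eq glue_inv_eq)
    qed
    have Tx: "T x = x + P a - L a" using Tform[OF aA x(1)] .
    have rhs: "iet_map cs C len (perm_restrict p C) y = y + P' a - L' a"
      using iet_map_eq[OF fC posC a] perm_restrict_set[OF fC injp] a(1)
      by (simp add: iet_transl_def P'_def L'_def)
    have lhs: "S_compl l A len p B y = glue l A len B (T x)"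
      by (simp add: S_compl_def gi T_def)
    have dc: "l + P a + len a \<le> gam \<or> gam + n \<le> l + P a" using dich[OF a(1)] .
    have sd: "(\<forall>b\<in>B. a < b) \<or> (\<forall>b\<in>B. b < a)" using side[OF a(1)] .
    show ?thesis
    proof (cases "gam = l")
      case True
      have up: "\<forall>c\<in>B. c < a" using sd Llow[OF a(1)] True gam_eq Lnn[of a] posC a(1) by auto
      have rt: "gam + n \<le> l + P a" using dc True Pnn[of a] posC a(1) by auto
      show ?thesis using lhs rhs Tx Lup[OF a(1) up] Pright[OF a(1) rt] x(2) True
        by (simp add: glue_eq)
    next
      case False
      show ?thesis
      proof (cases "\<forall>b\<in>B. a < b")
        case low: True
        have yx: "y = x" using x(2) Llow[OF a(1) low] xr gam_eq by (auto simp: glue_eq)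
        show ?thesis
        proof (cases "l + P a + len a \<le> gam")
          case True
          have "T x < gam" using Tx xr True Llow[OF a(1) low] by auto
          then show ?thesis using lhs rhs Tx Llow[OF a(1) low] Pleft[OF a(1) True] yx
            by (simp add: glue_eq)
        next
          case nl: False
          then have rt: "gam + n \<le> l + P a" using dc by auto
          have "\<not> T x < gam" using Tx xr rt Llow[OF a(1) low] n_pos by auto
          then show ?thesis using lhs rhs Tx Llow[OF a(1) low] Pright[OF a(1) rt] yx False
            by (simp add: glue_eq)
        qed
      next
        case nlow: False
        then have up: "\<forall>c\<in>B. c < a" using sd by auto
        have yx: "y = x - n" using x(2) Lup[OF a(1) up] xr gam_eq False n_pos by (auto simp: glue_eq)
        show ?thesis
        proof (cases "l + P a + len a \<le> gam")
          case True
          have "T x < gam" using Tx xr True Lup[OF a(1) up] by auto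
          then show ?thesis using lhs rhs Tx Lup[OF a(1) up] Pleft[OF a(1) True] yx
            by (simp add: glue_eq)
        next
          case nl: False
          then have rt: "gam + n \<le> l + P a" using dc by auto
          have "\<not> T x < gam" using Tx xr rt Lup[OF a(1) up] n_pos by auto
          then show ?thesis using lhs rhs Tx Lup[OF a(1) up] Pright[OF a(1) rt] yx False
            by (simp add: glue_eq)
        qed
      qed
    qed
  qed
  show ?thesis
    using part1 part2 part3 part4
    unfolding gam_def[symmetric] cs_def[symmetric] C_def[symmetric] by auto
qed


end
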